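(* Let $P_{Y|X}$ be a binary-input symmetric channel, i.e. a channel with input $X\in\{0,1\}$ for which there is a measurable involution $T:\mathcal Y\to\mathcal Y$ with $P_{Y|X=0}(T^{-1}A)=P_{Y|X=1}(A)$ for all measurable $A\subset\mathcal Y$. Then $$\eta_{\mathrm{KL}}(P_{Y|X})=I_{\chi^2}(X;Y)\quad\text{with }X\sim\mathrm{Bern}(1/2),$$ where $I_{\chi^2}(X;Y)=\chi^2(P_{XY}\|P_X\otimes P_Y)$.
   Context: $\chi^2(P\|Q)=\int dP\,(dP/dQ-1)^2$ if $P\ll Q$ and $\infty$ otherwise. For a channel $P_{Y|X}$, $\eta_{\mathrm{KL}}(P_{Y|X})=\sup D(Q_Y\|Q'_Y)/D(\pi_X\|\pi'_X)$ over pairs of input distributions $\pi_X\ne\pi'_X$ with $0<D(\pi_X\|\pi'_X)<\infty$, where $Q_Y,Q'_Y$ are the induced output distributions and $D$ is Kullback–Leibler divergence. *)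

theory Defs
  imports "HOL-Probability.Probability"
begin

text \<open>The integral is split into positive and negative parts of the
  log-likelihood ratio (the negative part is always finite when P << Q).\<close>
definition KL_div :: "'a measure \<Rightarrow> 'a measure \<Rightarrow> ereal" where
  "KL_div P Q =
    (if sets P = sets Q \<and> absolutely_continuous Q P then
       enn2ereal (\<integral>\<^sup>+ x. ennreal (ln (enn2real (RN_deriv Q P x))) \<partial>P)
       - enn2ereal (\<integral>\<^sup>+ x. ennreal (- ln (enn2real (RN_deriv Q P x))) \<partial>P)
     else \<infinity>)"

definition chi2_div :: "'a measure \<Rightarrow> 'a measure \<Rightarrow> ereal" where
  "chi2_div P Q =
    (if sets P = sets Q \<and> absolutely_continuous Q P then
       enn2ereal (\<integral>\<^sup>+ x. ennreal ((enn2real (RN_deriv Q P x) - 1)\<^sup>2) \<partial>P)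
     else \<infinity>)"

text \<open>A channel with binary input X in {0,1} (encoded as False/True) is a kernel
  K :: bool => 'b measure.  The output distribution induced by an input law pi is
  pi >>= K.\<close>
definition output_dist :: "bool pmf \<Rightarrow> (bool \<Rightarrow> 'b measure) \<Rightarrow> 'b measure" where
  "output_dist \<pi> K = measure_pmf \<pi> \<bind> K"

definition eta_KL :: "(bool \<Rightarrow> 'b measure) \<Rightarrow> ereal" where
  "eta_KL K = (SUP p \<in> {(\<pi>, \<pi>'). \<pi> \<noteq> \<pi>' \<and>
                        0 < KL_div (measure_pmf \<pi>) (measure_pmf \<pi>') \<and>
                        KL_div (measure_pmf \<pi>) (measure_pmf \<pi>') < \<infinity>}.
      KL_div (output_dist (fst p) K) (output_dist (snd p) K)
        / KL_div (measure_pmf (fst p)) (measure_pmf (snd p)))"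

definition joint_dist :: "bool pmf \<Rightarrow> (bool \<Rightarrow> 'b measure) \<Rightarrow> (bool \<times> 'b) measure" where
  "joint_dist \<pi> K =
     measure_pmf \<pi> \<bind> (\<lambda>x. distr (K x) (count_space UNIV \<Otimes>\<^sub>M K x) (\<lambda>y. (x, y)))"

definition chi2_mutual_info :: "bool pmf \<Rightarrow> (bool \<Rightarrow> 'b measure) \<Rightarrow> ereal" where
  "chi2_mutual_info \<pi> K =
     chi2_div (joint_dist \<pi> K) (measure_pmf \<pi> \<Otimes>\<^sub>M output_dist \<pi> K)"

end

theory Submission
  imports Defs
begin


lemma xlnx_bound: assumes "0 < s" "s \<le> 1" shows "\<bar>s * ln s\<bar> \<le> 2 * sqrt s"
proof -
  have q: "sqrt s > 0" using assms by simp
  have "ln (1 / sqrt s) \<le> 1 / sqrt s - 1" using q by (intro ln_le_minus_one) auto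
  also have "ln (1 / sqrt s) = - ln s / 2" using assms by (simp add: ln_div ln_sqrt)
  finally have "- ln s \<le> 2 / sqrt s" by (simp add: field_simps)
  moreover have "ln s \<le> 0" using assms by simp
  ultimately have "\<bar>s * ln s\<bar> \<le> s * (2 / sqrt s)" using assms
  proof -
    have "\<bar>s * ln s\<bar> = s * (- ln s)" using assms \<open>ln s \<le> 0\<close> by (simp add: abs_mult)
    also have "\<dots> \<le> s * (2 / sqrt s)" using assms \<open>- ln s \<le> 2 / sqrt s\<close> by (intro mult_left_mono) auto
    finally show ?thesis .
  qed
  also have "s * (2 / sqrt s) = 2 * sqrt s" using q assms
    by (simp add: field_simps)
  finally show ?thesis .
qed

lemma xlnx_cont: "continuous_on {0..} (\<lambda>s::real. s * ln s)"
proof -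
  have "continuous (at s within {0..}) (\<lambda>s::real. s * ln s)" if "s \<ge> 0" for s
  proof (cases "s = 0")
    case True
    have "((\<lambda>s::real. 2 * sqrt s) \<longlongrightarrow> 2 * sqrt 0) (at_right 0)"
      by (intro tendsto_intros)
    then have l: "((\<lambda>s::real. 2 * sqrt s) \<longlongrightarrow> 0) (at_right 0)" by simp
    have "eventually (\<lambda>s. norm (s * ln s) \<le> 2 * sqrt s) (at_right (0::real))"
      unfolding eventually_at_right[OF zero_less_one]
      by (rule exI[of _ 1]) (auto intro: xlnx_bound)
    then have "((\<lambda>s::real. s * ln s) \<longlongrightarrow> 0) (at_right 0)"
      using l by (rule Lim_null_comparison)
    then have "((\<lambda>s::real. s * ln s) \<longlongrightarrow> 0) (at 0 within {0..})"
      by (simp add: at_within_Ici_at_right)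
    then show ?thesis using True by (simp add: continuous_within)
  next
    case False
    then have "s > 0" using that by simp
    then have "isCont (\<lambda>s::real. s * ln s) s" by (intro continuous_intros) auto
    then show ?thesis by (rule continuous_at_imp_continuous_at_within)
  qed
  then show ?thesis by (simp add: continuous_on_eq_continuous_within)
qed

definition Hf :: "real \<Rightarrow> real \<Rightarrow> real" where "Hf u v = (1+u) * ln ((1+u)/(1+v))"
definition Df :: "real \<Rightarrow> real \<Rightarrow> real" where "Df u v = (Hf u v + Hf (-u) (-v))/2"
definition At :: "real \<Rightarrow> real" where "At x = ln((1+x)/(1-x))/2"

lemma Hf_repr: assumes "-1 \<le> x" "\<bar>v\<bar> < 1"
  shows "Hf x v = (1+x) * ln (1+x) - (1+x) * ln (1+v)"
proof (cases "x = -1")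
  case True then show ?thesis by (simp add: Hf_def)
next
  case False
  then have "1 + x > 0" using assms by simp
  moreover have "1 + v > 0" using assms by simp
  ultimately show ?thesis by (simp add: Hf_def ln_div algebra_simps)
qed

lemma Df_repr: assumes "\<bar>x\<bar> \<le> 1" "\<bar>v\<bar> < 1"
  shows "Df x v = ((1+x) * ln (1+x) - (1+x) * ln (1+v) + ((1-x) * ln (1-x) - (1-x) * ln (1-v)))/2"
  using Hf_repr[of x v] Hf_repr[of "-x" "-v"] assms by (simp add: Df_def)

lemma Df_cont: assumes "\<bar>v\<bar> < 1" shows "continuous_on {-1..1} (\<lambda>x. Df x v)"
proof -
  have c1: "continuous_on {-1..1} (\<lambda>x::real. (\<lambda>s. s * ln s) (1+x))"
    by (rule continuous_on_compose2[OF xlnx_cont]) (auto intro!: continuous_intros)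
  have c2: "continuous_on {-1..1} (\<lambda>x::real. (\<lambda>s. s * ln s) (1-x))"
    by (rule continuous_on_compose2[OF xlnx_cont]) (auto intro!: continuous_intros)
  have "continuous_on {-1..1} (\<lambda>x. ((1+x) * ln (1+x) - (1+x) * ln (1+v) + ((1-x) * ln (1-x) - (1-x) * ln (1-v)))/2)"
    using c1 c2 by (intro continuous_on_divide continuous_on_add continuous_on_diff c1 c2 continuous_on_mult continuous_on_const continuous_on_id) auto
  then show ?thesis
    by (rule continuous_on_cong[THEN iffD1, rotated 2]) (auto simp: Df_repr assms)
qed

lemma At_deriv: assumes "\<bar>x\<bar> < 1" shows "DERIV At x :> 1/(1-x^2)"
proof -
  have "DERIV (\<lambda>x. (ln (1+x) - ln (1-x))/2) x :> ((1/(1+x)) - (-1/(1-x)))/2"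
    using assms by (auto intro!: derivative_eq_intros)
  moreover have "((1/(1+x)) - (-1/(1-x)))/2 = 1/(1-x^2)"
  proof -
    have "1 + x > 0" "1 - x > 0" using assms by auto
    moreover have "1 - x^2 > 0" using abs_square_less_1[of x] assms by simp
    ultimately show ?thesis by (simp add: field_simps power2_eq_square)
  qed
  ultimately have "DERIV (\<lambda>x. (ln (1+x) - ln (1-x))/2) x :> 1/(1-x^2)" by (rule DERIV_cong)
  then show ?thesis
    by (rule has_field_derivative_transform_within_open[where S="{-1<..<1}"])
       (use assms in \<open>auto simp: At_def ln_div\<close>)
qed

lemma Df_deriv: assumes "\<bar>x\<bar> < 1" "\<bar>v\<bar> < 1"
  shows "DERIV (\<lambda>x. Df x v) x :> At x - At v"
proof -
  have "DERIV (\<lambda>x. ((1+x) * ln (1+x) - (1+x) * ln (1+v) + ((1-x) * ln (1-x) - (1-x) * ln (1-v)))/2) x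
        :> ((ln (1+x) + (1+x) * (1/(1+x))) - ln (1+v) + ((- ln (1-x) + (1-x) * (-1/(1-x))) + ln (1-v)))/2"
    using assms by (auto intro!: derivative_eq_intros)
  moreover have "((ln (1+x) + (1+x) * (1/(1+x))) - ln (1+v) + ((- ln (1-x) + (1-x) * (-1/(1-x))) + ln (1-v)))/2
      = At x - At v"
  proof -
    have "1 + x > 0" "1 - x > 0" "1 + v > 0" "1 - v > 0" using assms by auto
    moreover have "1 + x \<noteq> 0" "x \<noteq> 1" using assms by auto
    ultimately show ?thesis by (simp add: At_def ln_div field_simps)
  qed
  ultimately have "DERIV (\<lambda>x. ((1+x) * ln (1+x) - (1+x) * ln (1+v) + ((1-x) * ln (1-x) - (1-x) * ln (1-v)))/2) x
        :> At x - At v" by (rule DERIV_cong)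
  then show ?thesis
    by (rule has_field_derivative_transform_within_open[where S="{-1<..<1}"])
       (use assms in \<open>auto simp: Df_repr\<close>)
qed

lemma Df_self: "\<bar>v\<bar> < 1 \<Longrightarrow> Df v v = 0"
  by (simp add: Df_def Hf_def)

lemma psi_mono: assumes "0 \<le> t" "t \<le> 1" "-1 < x" "x \<le> y" "y < 1"
  shows "t * At x - At (t*x) \<le> t * At y - At (t*y)"
proof (rule DERIV_nonneg_imp_increasing_open[OF assms(4)])
  have d: "DERIV (\<lambda>z. t * At z - At (t*z)) z :> t * (1/(1-z^2)) - (1/(1-(t*z)^2)) * t"
    if "\<bar>z\<bar> < 1" for z
  proof -
    have tz: "\<bar>t*z\<bar> < 1" using that assms by (simp add: abs_mult) (meson le_less_trans mult_left_le_one_le abs_ge_zero less_imp_le that)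
    have a: "DERIV (\<lambda>z. t * At z) z :> t * (1/(1-z^2))"
      by (intro DERIV_cmult At_deriv that)
    have b: "DERIV (\<lambda>z. At (t*z)) z :> (1/(1-(t*z)^2)) * t"
      by (rule DERIV_chain2[where f=At and g="\<lambda>z. t*z", OF At_deriv[OF tz]]) (auto intro!: derivative_eq_intros)
    show ?thesis using DERIV_diff[OF a b] .
  qed
  show "\<exists>y. DERIV (\<lambda>z. t * At z - At (t*z)) z :> y \<and> y \<ge> 0" if "x < z" "z < y" for z
  proof -
    have z: "\<bar>z\<bar> < 1" using that assms by auto
    have "z^2 < 1" using z abs_square_less_1 by blast
    moreover have "(t*z)^2 \<le> z^2"
    proof -
      have "t^2 \<le> 1" using assms by (simp add: power_le_one)
      then have "t^2 * z^2 \<le> 1 * z^2" by (intro mult_right_mono) auto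
      then show ?thesis by (simp add: power_mult_distrib)
    qed
    ultimately have "1/(1-(t*z)^2) \<le> 1/(1-z^2)"
      by (intro divide_left_mono) auto
    then have "t * (1/(1-(t*z)^2)) \<le> t * (1/(1-z^2))" using assms by (intro mult_left_mono) auto
    then have "t * (1/(1-z^2)) - (1/(1-(t*z)^2)) * t \<ge> 0" by simp
    with d[OF z] show ?thesis by blast
  qed
  show "continuous_on {x..y} (\<lambda>z. t * At z - At (t*z))"
  proof (rule continuous_at_imp_continuous_on, intro ballI)
    fix z assume "z \<in> {x..y}"
    then have "\<bar>z\<bar> < 1" using assms by auto
    from DERIV_isCont[OF d[OF this]] show "isCont (\<lambda>z. t * At z - At (t*z)) z" .
  qed
qed

lemma scale_bound: assumes "0 \<le> (t::real)" "t \<le> 1" "\<bar>x\<bar> \<le> 1" shows "-1 \<le> t*x" "t*x \<le> 1"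
proof -
  have "\<bar>t*x\<bar> \<le> 1" using assms by (simp add: abs_mult mult_le_one)
  then show "-1 \<le> t*x" "t*x \<le> 1" by auto
qed

lemma D_scale: assumes u: "\<bar>u\<bar> \<le> 1" and v: "\<bar>v\<bar> < 1" and t: "0 \<le> t" "t \<le> 1"
  shows "Df (t * u) (t * v) \<le> t^2 * Df u v"
proof (cases "t = 0")
  case True then show ?thesis by (simp add: Df_self)
next
  case False
  then have t0: "t > 0" using t by simp
  have tv: "\<bar>t * v\<bar> < 1" using v t by (simp add: abs_mult) (meson le_less_trans mult_left_le_one_le abs_ge_zero less_imp_le v)
  define \<Phi> where "\<Phi> x = t^2 * Df x v - Df (t*x) (t * v)" for x
  have \<Phi>v: "\<Phi> v = 0" using v tv by (simp add: \<Phi>_def Df_self)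
  have dd: "DERIV \<Phi> x :> t^2 * (At x - At v) - (At (t*x) - At (t * v)) * t" if x: "\<bar>x\<bar> < 1" for x
  proof -
    have tx: "\<bar>t*x\<bar> < 1" using x t by (simp add: abs_mult) (meson le_less_trans mult_left_le_one_le abs_ge_zero less_imp_le x)
    have a: "DERIV (\<lambda>x. t^2 * Df x v) x :> t^2 * (At x - At v)"
      by (intro DERIV_cmult Df_deriv x v)
    have b: "DERIV (\<lambda>x. Df (t*x) (t * v)) x :> (At (t*x) - At (t * v)) * t"
      by (rule DERIV_chain2[where f="\<lambda>x. Df x (t * v)" and g="\<lambda>z. t*z", OF Df_deriv[OF tx tv]])
         (auto intro!: derivative_eq_intros)
    show ?thesis unfolding \<Phi>_def using DERIV_diff[OF a b] .
  qed
  have dsign: "t^2 * (At x - At v) - (At (t*x) - At (t * v)) * t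
      = t * ((t * At x - At (t*x)) - (t * At v - At (t * v)))" for x
    by (simp add: algebra_simps power2_eq_square)
  have cont: "continuous_on {a..b} \<Phi>" if "-1 \<le> a" "b \<le> 1" for a b
  proof -
    have c1: "continuous_on {-1..1} (\<lambda>x. Df x v)" by (rule Df_cont[OF v])
    have c2: "continuous_on {-1..1} (\<lambda>x. Df (t*x) (t * v))"
      by (rule continuous_on_compose2[OF Df_cont[OF tv]])
         (use t scale_bound in \<open>auto intro!: continuous_intros\<close>)
    have "continuous_on {-1..1} \<Phi>" unfolding \<Phi>_def by (intro continuous_intros c1 c2)
    then show ?thesis by (rule continuous_on_subset) (use that in auto)
  qed
  show ?thesis
  proof (cases "v \<le> u")
    case True
    have "\<Phi> v \<le> \<Phi> u"
    proof (rule DERIV_nonneg_imp_increasing_open[OF True])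
      show "\<exists>y. DERIV \<Phi> x :> y \<and> y \<ge> 0" if "v < x" "x < u" for x
      proof -
        have x: "\<bar>x\<bar> < 1" using that u v by auto
        have "t * At v - At (t * v) \<le> t * At x - At (t*x)"
          using psi_mono[of t v x] t that v x by auto
        then have "t^2 * (At x - At v) - (At (t*x) - At (t * v)) * t \<ge> 0"
          unfolding dsign using t0 by simp
        with dd[OF x] show ?thesis by blast
      qed
      show "continuous_on {v..u} \<Phi>" using u v by (intro cont) auto
    qed
    then show ?thesis using \<Phi>v by (simp add: \<Phi>_def)
  next
    case False
    then have uv: "u \<le> v" by simp
    have "\<Phi> u \<ge> \<Phi> v"
    proof (rule DERIV_nonpos_imp_decreasing_open[OF uv])
      show "\<exists>y. DERIV \<Phi> x :> y \<and> y \<le> 0" if "u < x" "x < v" for x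
      proof -
        have x: "\<bar>x\<bar> < 1" using that u v by auto
        have "t * At x - At (t*x) \<le> t * At v - At (t * v)"
          using psi_mono[of t x v] t that v x by auto
        then have "t^2 * (At x - At v) - (At (t*x) - At (t * v)) * t \<le> 0"
          unfolding dsign using t0 by (simp add: mult_nonneg_nonpos)
        with dd[OF x] show ?thesis by blast
      qed
      show "continuous_on {u..v} \<Phi>" using u v by (intro cont) auto
    qed
    then show ?thesis using \<Phi>v by (simp add: \<Phi>_def)
  qed
qed

lemma Df_even: "Df (-u) (-v) = Df u v" by (simp add: Df_def)

lemma At_ge: assumes "0 \<le> x" "x < 1" shows "x \<le> At x"
proof -
  have "(\<lambda>z. At z - z) 0 \<le> (\<lambda>z. At z - z) x"
  proof (rule DERIV_nonneg_imp_increasing_open[OF assms(1)])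
    have d: "DERIV (\<lambda>z. At z - z) z :> 1/(1-z^2) - 1" if "\<bar>z\<bar> < 1" for z
      by (intro derivative_intros At_deriv that)
    show "\<exists>y. DERIV (\<lambda>z. At z - z) z :> y \<and> y \<ge> 0" if "0 < z" "z < x" for z
    proof -
      have z: "\<bar>z\<bar> < 1" using that assms by auto
      have "z^2 < 1" using z abs_square_less_1 by blast
      moreover have "1 - z^2 \<le> 1" by simp
      ultimately have "1/(1-z^2) \<ge> 1" by simp
      with d[OF z] show ?thesis by (intro exI[of _ "1/(1-z^2) - 1"]) auto
    qed
    show "continuous_on {0..x} (\<lambda>z. At z - z)"
    proof (rule continuous_at_imp_continuous_on, intro ballI)
      fix z assume "z \<in> {0..x}"
      then have "\<bar>z\<bar> < 1" using assms by auto
      from DERIV_isCont[OF d[OF this]] show "isCont (\<lambda>z. At z - z) z" .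
    qed
  qed
  then show ?thesis by (simp add: At_def)
qed

lemma At_le: assumes "0 \<le> x" "x < 1" shows "At x \<le> x/(1-x)"
proof -
  have p: "(1+x)/(1-x) > 0" using assms by simp
  have "ln ((1+x)/(1-x)) \<le> (1+x)/(1-x) - 1" using ln_le_minus_one[OF p] .
  also have "\<dots> = 2*x/(1-x)" using assms by (simp add: field_simps)
  finally have "ln ((1+x)/(1-x)) \<le> 2*x/(1-x)" .
  moreover have "2*x/(1-x) = 2*(x/(1-x))" by simp
  ultimately show ?thesis unfolding At_def by linarith
qed

lemma D0_lower_pos: assumes "0 \<le> u" "u < 1" shows "u^2/2 \<le> Df u 0"
proof -
  have d: "DERIV (\<lambda>x. Df x 0 - x^2/2) x :> (At x - At 0) - x" if "\<bar>x\<bar> < 1" for x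
    using DERIV_diff[OF Df_deriv[OF that, of 0] DERIV_cdivide[OF DERIV_pow[of 2 x], of 2]] by simp
  have "(\<lambda>x. Df x 0 - x^2/2) 0 \<le> (\<lambda>x. Df x 0 - x^2/2) u"
  proof (rule DERIV_nonneg_imp_increasing_open[OF assms(1)])
    show "\<exists>y. DERIV (\<lambda>x. Df x 0 - x^2/2) x :> y \<and> y \<ge> 0" if "0 < x" "x < u" for x
    proof -
      have x: "\<bar>x\<bar> < 1" using that assms by auto
      have "x \<le> At x" using At_ge that assms by auto
      moreover have "At 0 = 0" by (simp add: At_def)
      ultimately show ?thesis using d[OF x] by (intro exI[of _ "(At x - At 0) - x"]) auto
    qed
    show "continuous_on {0..u} (\<lambda>x. Df x 0 - x^2/2)"
    proof (rule continuous_at_imp_continuous_on, intro ballI)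
      fix z assume "z \<in> {0..u}"
      then have "\<bar>z\<bar> < 1" using assms by auto
      from DERIV_isCont[OF d[OF this]] show "isCont (\<lambda>x. Df x 0 - x^2/2) z" .
    qed
  qed
  then show ?thesis by (simp add: Df_self)
qed

lemma D0_lower: assumes "\<bar>u\<bar> < 1" shows "u^2/2 \<le> Df u 0"
proof (cases "u \<ge> 0")
  case True then show ?thesis using D0_lower_pos assms by auto
next
  case False
  then have "(-u)^2/2 \<le> Df (-u) 0" using D0_lower_pos[of "-u"] assms by auto
  moreover have "Df (-u) 0 = Df u 0" using Df_even[of u 0] by simp
  ultimately show ?thesis by simp
qed

lemma D0_upper: assumes "0 \<le> e" "e < 1" shows "Df e 0 \<le> e^2/(2*(1-e))"
proof -
  have d: "DERIV (\<lambda>x. x^2/(2*(1-e)) - Df x 0) x :> (2*x)/(2*(1-e)) - (At x - At 0)" if "\<bar>x\<bar> < 1" for x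
    using DERIV_diff[OF DERIV_cdivide[OF DERIV_pow[of 2 x], of "2*(1-e)"] Df_deriv[OF that, of 0]] by simp
  have "(\<lambda>x. x^2/(2*(1-e)) - Df x 0) 0 \<le> (\<lambda>x. x^2/(2*(1-e)) - Df x 0) e"
  proof (rule DERIV_nonneg_imp_increasing_open[OF assms(1)])
    show "\<exists>y. DERIV (\<lambda>x. x^2/(2*(1-e)) - Df x 0) x :> y \<and> y \<ge> 0" if "0 < x" "x < e" for x
    proof -
      have x: "\<bar>x\<bar> < 1" using that assms by auto
      have "At x \<le> x/(1-x)" using At_le that assms by auto
      also have "x/(1-x) \<le> x/(1-e)" using that assms by (intro divide_left_mono) auto
      also have "x/(1-e) = (2*x)/(2*(1-e))" by (metis mult_divide_mult_cancel_left_if zero_neq_numeral)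
      finally have "At x \<le> (2*x)/(2*(1-e))" .
      moreover have "At 0 = 0" by (simp add: At_def)
      ultimately show ?thesis using d[OF x] by (intro exI[of _ "(2*x)/(2*(1-e)) - (At x - At 0)"]) auto
    qed
    show "continuous_on {0..e} (\<lambda>x. x^2/(2*(1-e)) - Df x 0)"
    proof (rule continuous_at_imp_continuous_on, intro ballI)
      fix z assume "z \<in> {0..e}"
      then have "\<bar>z\<bar> < 1" using assms by auto
      from DERIV_isCont[OF d[OF this]] show "isCont (\<lambda>x. x^2/(2*(1-e)) - Df x 0) z" .
    qed
  qed
  then show ?thesis by (simp add: Df_self)
qed




lemma nn_integral_pmf_bool:
  "(\<integral>\<^sup>+x. f x \<partial>measure_pmf \<pi>) = ennreal (pmf \<pi> False) * f False + ennreal (pmf \<pi> True) * f True"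
  by (simp add: nn_integral_measure_pmf nn_integral_count_space_finite UNIV_bool add.commute)

lemma K_meas:
  assumes prob: "\<And>x. prob_space (K x)" and sets_K: "\<And>x. sets (K x) = sets M"
  shows "K \<in> measurable (measure_pmf \<pi>) (subprob_algebra M)"
  using prob sets_K by (auto simp: space_subprob_algebra prob_space_imp_subprob_space)

lemma out_sets:
  assumes "\<And>x. sets (K x) = sets M"
  shows "sets (output_dist \<pi> K) = sets M"
  unfolding output_dist_def by (rule sets_bind) (use assms in auto)

lemma out_emeasure:
  assumes prob: "\<And>x. prob_space (K x)" and sets_K: "\<And>x. sets (K x) = sets M" and A: "A \<in> sets M"
  shows "emeasure (output_dist \<pi> K) A =
     ennreal (pmf \<pi> False) * emeasure (K False) A + ennreal (pmf \<pi> True) * emeasure (K True) A"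
  unfolding output_dist_def
  by (subst emeasure_bind[OF _ K_meas[OF prob sets_K] A]) (auto simp: nn_integral_pmf_bool)

lemma out_density:
  assumes prob: "\<And>x. prob_space (K x)" and sets_K: "\<And>x. sets (K x) = sets \<nu>"
    and fm: "f \<in> borel_measurable \<nu>" and fb: "\<And>y. y \<in> space \<nu> \<Longrightarrow> 0 \<le> f y \<and> f y \<le> 2"
    and K0: "K False = density \<nu> f" and K1: "K True = density \<nu> (\<lambda>y. ennreal (2 - f y))"
  shows "output_dist \<pi> K = density \<nu> (\<lambda>y. ennreal (1 + (1 - 2 * pmf \<pi> True) * (f y - 1)))"
proof (rule measure_eqI)
  show "sets (output_dist \<pi> K) = sets (density \<nu> (\<lambda>y. ennreal (1 + (1 - 2 * pmf \<pi> True) * (f y - 1))))"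
    using out_sets[OF sets_K] by simp
  fix A assume "A \<in> sets (output_dist \<pi> K)"
  then have A: "A \<in> sets \<nu>" using out_sets[OF sets_K] by simp
  define p where "p = pmf \<pi> True"
  have p: "0 \<le> p" "p \<le> 1" by (auto simp: p_def pmf_le_1)
  have pF: "pmf \<pi> False = 1 - p" by (simp add: p_def pmf_False_conv_True)
  have "emeasure (output_dist \<pi> K) A =
     ennreal (1 - p) * (\<integral>\<^sup>+y. ennreal (f y) * indicator A y \<partial>\<nu>) + ennreal p * (\<integral>\<^sup>+y. ennreal (2 - f y) * indicator A y \<partial>\<nu>)"
  proof -
    have e0: "emeasure (K False) A = (\<integral>\<^sup>+y. ennreal (f y) * indicator A y \<partial>\<nu>)"
      unfolding K0 using fm A by (intro emeasure_density) auto
    have e1: "emeasure (K True) A = (\<integral>\<^sup>+y. ennreal (2 - f y) * indicator A y \<partial>\<nu>)"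
      unfolding K1 using fm A by (intro emeasure_density) auto
    show ?thesis using out_emeasure[where K=K and \<pi>=\<pi>, OF prob sets_K A] unfolding e0 e1 pF p_def .
  qed
  also have "\<dots> = (\<integral>\<^sup>+y. ennreal (1 - p) * (ennreal (f y) * indicator A y) + ennreal p * (ennreal (2 - f y) * indicator A y) \<partial>\<nu>)"
    using fm A by (simp add: nn_integral_add nn_integral_cmult)
  also have "\<dots> = (\<integral>\<^sup>+y. ennreal (1 + (1 - 2 * p) * (f y - 1)) * indicator A y \<partial>\<nu>)"
  proof (rule nn_integral_cong)
    fix y assume y: "y \<in> space \<nu>"
    have "ennreal (1 - p) * ennreal (f y) + ennreal p * ennreal (2 - f y)
        = ennreal ((1 - p) * f y + p * (2 - f y))"
    proof -
      have a: "0 \<le> (1-p) * f y" "0 \<le> p * (2 - f y)" using p fb[OF y] by auto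
      have "ennreal ((1 - p) * f y + p * (2 - f y)) = ennreal ((1 - p) * f y) + ennreal (p * (2 - f y))"
        using a by (rule ennreal_plus)
      also have "\<dots> = ennreal (1 - p) * ennreal (f y) + ennreal p * ennreal (2 - f y)"
        using p fb[OF y] by (simp add: ennreal_mult)
      finally show ?thesis by simp
    qed
    also have "(1 - p) * f y + p * (2 - f y) = 1 + (1 - 2 * p) * (f y - 1)" by (simp add: algebra_simps)
    finally show "ennreal (1 - p) * (ennreal (f y) * indicator A y) + ennreal p * (ennreal (2 - f y) * indicator A y)
        = ennreal (1 + (1 - 2 * p) * (f y - 1)) * indicator A y"
      by (simp add: indicator_def)
  qed
  also have "\<dots> = emeasure (density \<nu> (\<lambda>y. ennreal (1 + (1 - 2 * pmf \<pi> True) * (f y - 1)))) A"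
    using fm A by (simp add: emeasure_density p_def)
  finally show "emeasure (output_dist \<pi> K) A = emeasure (density \<nu> (\<lambda>y. ennreal (1 + (1 - 2 * pmf \<pi> True) * (f y - 1)))) A" .
qed

lemma enn2ereal_fin: "x \<noteq> \<top> \<Longrightarrow> enn2ereal x = ereal (enn2real x)"
  by (metis enn2ereal_ennreal enn2real_nonneg ennreal_enn2real top.not_eq_extremum)

lemma KL_density:
  fixes \<nu> :: "'b measure" and h h' :: "'b \<Rightarrow> real"
  assumes hm: "h \<in> borel_measurable \<nu>" and h'm: "h' \<in> borel_measurable \<nu>"
    and hb: "\<And>y. y \<in> space \<nu> \<Longrightarrow> 0 \<le> h y"
    and h'b: "\<And>y. y \<in> space \<nu> \<Longrightarrow> 0 < h' y"
    and fin: "finite_measure (density \<nu> h)"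
    and int: "integrable \<nu> (\<lambda>y. h y * ln (h y / h' y))"
  shows "KL_div (density \<nu> h) (density \<nu> h') = ereal (\<integral>y. h y * ln (h y / h' y) \<partial>\<nu>)"
proof -
  let ?P = "density \<nu> h" and ?Q = "density \<nu> h'"
  define F where "F y = h y * ln (h y / h' y)" for y
  have sets: "sets ?P = sets ?Q" by simp
  have ac: "absolutely_continuous ?Q ?P"
    unfolding absolutely_continuous_def
  proof
    fix A assume "A \<in> null_sets ?Q"
    then have A: "A \<in> sets \<nu>" "AE x in \<nu>. x \<in> A \<longrightarrow> ennreal (h' x) = 0"
      using h'm by (auto simp: null_sets_density_iff)
    have "AE x in \<nu>. x \<notin> A" using A(2) AE_space
    proof eventually_elim
      case (elim x) then show ?case using h'b[of x] by auto
    qed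
    then show "A \<in> null_sets ?P" using A hm by (auto simp: null_sets_density_iff elim!: eventually_mono)
  qed
  have dd: "density ?Q (\<lambda>y. ennreal (h y / h' y)) = ?P"
  proof -
    have "density ?Q (\<lambda>y. ennreal (h y / h' y)) = density \<nu> (\<lambda>y. ennreal (h' y) * ennreal (h y / h' y))"
      using hm h'm by (intro density_density_eq) auto
    also have "\<dots> = ?P"
    proof (rule density_cong)
      show "AE x in \<nu>. ennreal (h' x) * ennreal (h x / h' x) = ennreal (h x)"
      proof (rule AE_I2)
        fix x assume x: "x \<in> space \<nu>"
        have "ennreal (h' x) * ennreal (h x / h' x) = ennreal (h' x * (h x / h' x))"
          using h'b[OF x] by (metis ennreal_mult' less_imp_le)
        also have "h' x * (h x / h' x) = h x" using h'b[OF x] by simp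
        finally show "ennreal (h' x) * ennreal (h x / h' x) = ennreal (h x)" .
      qed
    qed (use hm h'm in auto)
    finally show ?thesis .
  qed
  have "AE x in ?Q. ennreal (h x / h' x) = RN_deriv ?Q ?P x"
    using hm h'm fin by (intro RN_deriv_unique_sigma_finite dd finite_measure.axioms(1)) auto
  then have "AE x in \<nu>. 0 < ennreal (h' x) \<longrightarrow> ennreal (h x / h' x) = RN_deriv ?Q ?P x"
    using h'm by (subst (asm) AE_density) auto
  then have RN: "AE x in \<nu>. RN_deriv ?Q ?P x = ennreal (h x / h' x)"
    using AE_space
  proof eventually_elim
    case (elim x) then show ?case using h'b[of x] by simp
  qed
  have RNm: "RN_deriv ?Q ?P \<in> borel_measurable \<nu>"
  proof -
    have "measurable ?Q (borel :: ennreal measure) = measurable \<nu> borel" by (rule measurable_cong_sets) auto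
    then show ?thesis using borel_measurable_RN_deriv[of ?Q ?P] by (simp only:)
  qed
  have pos: "(\<integral>\<^sup>+ x. ennreal (ln (enn2real (RN_deriv ?Q ?P x))) \<partial>?P) = (\<integral>\<^sup>+ x. ennreal (F x) \<partial>\<nu>)"
  proof -
    have "(\<integral>\<^sup>+ x. ennreal (ln (enn2real (RN_deriv ?Q ?P x))) \<partial>?P)
        = (\<integral>\<^sup>+ x. ennreal (h x) * ennreal (ln (enn2real (RN_deriv ?Q ?P x))) \<partial>\<nu>)"
      using hm RNm by (intro nn_integral_density) auto
    also have "\<dots> = (\<integral>\<^sup>+ x. ennreal (F x) \<partial>\<nu>)"
    proof (rule nn_integral_cong_AE)
      show "AE x in \<nu>. ennreal (h x) * ennreal (ln (enn2real (RN_deriv ?Q ?P x))) = ennreal (F x)"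
        using RN AE_space
      proof (eventually_elim)
        case (elim x)
        then have "0 \<le> h x / h' x" using hb[of x] h'b[of x] by simp
        then show ?case using elim hb[of x] by (simp add: F_def ennreal_mult')
      qed
    qed
    finally show ?thesis .
  qed
  have neg: "(\<integral>\<^sup>+ x. ennreal (- ln (enn2real (RN_deriv ?Q ?P x))) \<partial>?P) = (\<integral>\<^sup>+ x. ennreal (- F x) \<partial>\<nu>)"
  proof -
    have "(\<integral>\<^sup>+ x. ennreal (- ln (enn2real (RN_deriv ?Q ?P x))) \<partial>?P)
        = (\<integral>\<^sup>+ x. ennreal (h x) * ennreal (- ln (enn2real (RN_deriv ?Q ?P x))) \<partial>\<nu>)"
      using hm RNm by (intro nn_integral_density) auto
    also have "\<dots> = (\<integral>\<^sup>+ x. ennreal (- F x) \<partial>\<nu>)"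
    proof (rule nn_integral_cong_AE)
      show "AE x in \<nu>. ennreal (h x) * ennreal (- ln (enn2real (RN_deriv ?Q ?P x))) = ennreal (- F x)"
        using RN AE_space
      proof (eventually_elim)
        case (elim x)
        then have "0 \<le> h x / h' x" using hb[of x] h'b[of x] by simp
        then show ?case using elim hb[of x] by (simp add: F_def ennreal_mult'[symmetric])
      qed
    qed
    finally show ?thesis .
  qed
  have intF: "integrable \<nu> F" using int by (simp add: F_def[abs_def])
  have "KL_div ?P ?Q = enn2ereal (\<integral>\<^sup>+ x. ennreal (F x) \<partial>\<nu>) - enn2ereal (\<integral>\<^sup>+ x. ennreal (- F x) \<partial>\<nu>)"
    unfolding KL_div_def using sets ac pos neg by simp
  also have "\<dots> = ereal (enn2real (\<integral>\<^sup>+ x. ennreal (F x) \<partial>\<nu>) - enn2real (\<integral>\<^sup>+ x. ennreal (- F x) \<partial>\<nu>))"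
    using integrableD(2,3)[OF intF] by (simp add: enn2ereal_fin)
  also have "\<dots> = ereal (\<integral>x. F x \<partial>\<nu>)"
    using real_lebesgue_integral_def[OF intF] by simp
  finally show ?thesis by (simp add: F_def)
qed

lemma Hf_bound: assumes u: "\<bar>u\<bar> \<le> 1" and v: "\<bar>v\<bar> \<le> \<beta>" and b: "\<beta> < 1"
  shows "\<bar>Hf u v\<bar> \<le> 2 + 4/(1-\<beta>)"
proof (cases "u = -1")
  case True then show ?thesis using b by (simp add: Hf_def)
next
  case False
  then have u1: "1 + u > 0" using u by auto
  have v1: "1 + v \<ge> 1 - \<beta>" "1 - \<beta> > 0" using v b by auto
  define r where "r = (1+u)/(1+v)"
  have r: "r > 0" using u1 v1 by (simp add: r_def)
  have up: "ln r \<le> r - 1" using ln_le_minus_one[OF r] .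
  have lo: "1 - 1/r \<le> ln r"
  proof -
    have "ln (1/r) \<le> 1/r - 1" using r by (intro ln_le_minus_one) auto
    then show ?thesis using r by (simp add: ln_div)
  qed
  have "Hf u v = (1+u) * ln r" by (simp add: Hf_def r_def)
  moreover have "(1+u) * ln r \<le> (1+u) * (r - 1)" using up u1 by (intro mult_left_mono) auto
  moreover have "(1+u) * (r - 1) \<le> 4/(1-\<beta>)"
  proof -
    have "(1+u) * (r - 1) \<le> (1+u) * r" using u1 by simp
    also have "\<dots> = (1+u)^2/(1+v)" by (simp add: r_def power2_eq_square)
    also have "\<dots> \<le> 4/(1+v)"
    proof -
      have "(1+u)^2 \<le> 2^2" using u u1 by (intro power_mono) auto
      then show ?thesis using v1 by (intro divide_right_mono) auto
    qed
    also have "\<dots> \<le> 4/(1-\<beta>)" using v1 by (intro divide_left_mono) auto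
    finally show ?thesis .
  qed
  moreover have "(1+u) * ln r \<ge> (1+u) * (1 - 1/r)" using lo u1 by (intro mult_left_mono) auto
  moreover have "(1+u) * (1 - 1/r) = u - v" using u1 v1 by (simp add: r_def field_simps)
  moreover have "u - v \<ge> -2" using u v b by auto
  moreover have "4/(1-\<beta>) \<ge> 0" using v1 by simp
  ultimately show ?thesis by linarith
qed

lemma KL_out:
  fixes K :: "bool \<Rightarrow> 'b measure" and \<nu> :: "'b measure" and f :: "'b \<Rightarrow> real"
  assumes prob: "\<And>x. prob_space (K x)" and sets_K: "\<And>x. sets (K x) = sets \<nu>"
    and p\<nu>: "prob_space \<nu>"
    and fm: "f \<in> borel_measurable \<nu>" and fb: "\<And>y. y \<in> space \<nu> \<Longrightarrow> 0 \<le> f y \<and> f y \<le> 2"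
    and K0: "K False = density \<nu> f" and K1: "K True = density \<nu> (\<lambda>y. ennreal (2 - f y))"
    and p': "0 < pmf \<pi>' True" "pmf \<pi>' True < 1"
  shows "KL_div (output_dist \<pi> K) (output_dist \<pi>' K) =
    ereal (\<integral>y. Hf ((1 - 2 * pmf \<pi> True) * (f y - 1)) ((1 - 2 * pmf \<pi>' True) * (f y - 1)) \<partial>\<nu>)"
proof -
  interpret \<nu>: prob_space \<nu> by (rule p\<nu>)
  define a where "a = 1 - 2 * pmf \<pi> True"
  define b where "b = 1 - 2 * pmf \<pi>' True"
  have a: "\<bar>a\<bar> \<le> 1"
  proof -
    have "0 \<le> pmf \<pi> True" "pmf \<pi> True \<le> 1" by (auto simp: pmf_le_1)
    then show ?thesis unfolding a_def by linarith
  qed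
  have b: "\<bar>b\<bar> < 1" using p' by (simp add: b_def)
  have g: "\<bar>f y - 1\<bar> \<le> 1" if "y \<in> space \<nu>" for y using fb[OF that] by auto
  have ag: "\<bar>a * (f y - 1)\<bar> \<le> 1" if "y \<in> space \<nu>" for y
    using mult_le_one[OF a _ g[OF that]] by (simp add: abs_mult)
  have bg: "\<bar>b * (f y - 1)\<bar> \<le> \<bar>b\<bar>" if "y \<in> space \<nu>" for y
    using mult_left_le_one_le[of "\<bar>b\<bar>" "\<bar>f y - 1\<bar>"] g[OF that] by (simp add: abs_mult mult.commute)
  define h where "h y = 1 + a * (f y - 1)" for y
  define h' where "h' y = 1 + b * (f y - 1)" for y
  have O: "output_dist \<pi> K = density \<nu> h"
    using out_density[OF prob sets_K fm fb K0 K1, of \<pi>] by (simp add: h_def[abs_def] a_def)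
  have O': "output_dist \<pi>' K = density \<nu> h'"
    using out_density[OF prob sets_K fm fb K0 K1, of \<pi>'] by (simp add: h'_def[abs_def] b_def)
  have fin: "finite_measure (density \<nu> h)"
  proof (rule finite_measureI)
    have sp: "space (K x) = space \<nu>" for x by (rule sets_eq_imp_space_eq[OF sets_K])
    have e1: "emeasure (K x) (space \<nu>) = 1" for x
      using prob_space.emeasure_space_1[OF prob[of x]] sp[of x] by simp
    have "emeasure (output_dist \<pi> K) (space \<nu>) = ennreal (pmf \<pi> False) + ennreal (pmf \<pi> True)"
      using out_emeasure[where K=K and \<pi>=\<pi>, OF prob sets_K, of "space \<nu>"] e1 by simp
    then have "emeasure (output_dist \<pi> K) (space \<nu>) \<noteq> \<infinity>" by simp
    then show "emeasure (density \<nu> h) (space (density \<nu> h)) \<noteq> \<infinity>" using O by simp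
  qed
  have Heq: "Hf (a * (f y - 1)) (b * (f y - 1)) = h y * ln (h y / h' y)" for y
    by (simp add: Hf_def h_def h'_def)
  have int: "integrable \<nu> (\<lambda>y. Hf (a * (f y - 1)) (b * (f y - 1)))"
  proof (rule \<nu>.integrable_const_bound[where B="2 + 4/(1-\<bar>b\<bar>)"])
    show "AE x in \<nu>. norm (Hf (a * (f x - 1)) (b * (f x - 1))) \<le> 2 + 4/(1-\<bar>b\<bar>)"
    proof (rule AE_I2)
      fix y assume y: "y \<in> space \<nu>"
      have "\<bar>Hf (a * (f y - 1)) (b * (f y - 1))\<bar> \<le> 2 + 4/(1-\<bar>b\<bar>)"
        by (rule Hf_bound[OF ag[OF y] bg[OF y] b])
      then show "norm (Hf (a * (f y - 1)) (b * (f y - 1))) \<le> 2 + 4/(1-\<bar>b\<bar>)" by simp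
    qed
    show "(\<lambda>y. Hf (a * (f y - 1)) (b * (f y - 1))) \<in> borel_measurable \<nu>"
      unfolding Hf_def using fm by measurable
  qed
  have "KL_div (density \<nu> h) (density \<nu> h') = ereal (\<integral>y. h y * ln (h y / h' y) \<partial>\<nu>)"
  proof (rule KL_density[OF _ _ _ _ fin])
    show "h \<in> borel_measurable \<nu>" "h' \<in> borel_measurable \<nu>"
      unfolding h_def[abs_def] h'_def[abs_def] using fm by measurable
    show "0 \<le> h y" if "y \<in> space \<nu>" for y using ag[OF that] by (simp add: h_def)
    show "0 < h' y" if "y \<in> space \<nu>" for y using bg[OF that] b by (simp add: h'_def)
    show "integrable \<nu> (\<lambda>y. h y * ln (h y / h' y))" using int by (simp add: Heq)
  qed
  then show ?thesis using O O' by (simp add: Heq[symmetric] a_def b_def)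
qed

lemma inv2: "inverse (2::ennreal) * 2 = 1"
proof -
  have "(2::ennreal) / 2 = 1" by (rule ennreal_divide_self) auto
  then show ?thesis by (simp add: divide_ennreal_def mult.commute)
qed

lemma KL_in:
  assumes p': "0 < pmf \<pi>' True" "pmf \<pi>' True < 1"
  shows "KL_div (measure_pmf \<pi>) (measure_pmf \<pi>') = ereal (Df (1 - 2 * pmf \<pi> True) (1 - 2 * pmf \<pi>' True))"
proof -
  define K :: "bool \<Rightarrow> bool measure" where "K x = return (count_space UNIV) x" for x
  define \<nu> where "\<nu> = measure_pmf (bernoulli_pmf (1/2))"
  define f :: "bool \<Rightarrow> real" where "f x = (if x then 0 else 2)" for x
  have out: "output_dist \<rho> K = measure_pmf \<rho>" for \<rho>
    unfolding output_dist_def K_def[abs_def] by (rule bind_return'') simp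
  have prob: "prob_space (K x)" for x unfolding K_def by (rule prob_space_return) simp
  have sets_K: "sets (K x) = sets \<nu>" for x by (simp add: K_def \<nu>_def)
  have p\<nu>: "prob_space \<nu>" unfolding \<nu>_def by (rule prob_space_measure_pmf)
  have fm: "f \<in> borel_measurable \<nu>" by (simp add: \<nu>_def)
  have fb: "0 \<le> f y \<and> f y \<le> 2" for y by (simp add: f_def)
  have K0: "K False = density \<nu> f"
  proof (rule measure_eqI)
    show "sets (K False) = sets (density \<nu> f)" by (simp add: K_def \<nu>_def)
    fix A assume "A \<in> sets (K False)"
    show "emeasure (K False) A = emeasure (density \<nu> f) A"
      by (simp add: K_def \<nu>_def emeasure_density nn_integral_pmf_bool f_def indicator_def ennreal_mult'[symmetric] inv2)
  qed
  have K1: "K True = density \<nu> (\<lambda>y. ennreal (2 - f y))"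
  proof (rule measure_eqI)
    show "sets (K True) = sets (density \<nu> (\<lambda>y. ennreal (2 - f y)))" by (simp add: K_def \<nu>_def)
    fix A assume "A \<in> sets (K True)"
    show "emeasure (K True) A = emeasure (density \<nu> (\<lambda>y. ennreal (2 - f y))) A"
      by (simp add: K_def \<nu>_def emeasure_density nn_integral_pmf_bool f_def indicator_def ennreal_mult'[symmetric] inv2)
  qed
  have "KL_div (output_dist \<pi> K) (output_dist \<pi>' K) =
    ereal (\<integral>y. Hf ((1 - 2 * pmf \<pi> True) * (f y - 1)) ((1 - 2 * pmf \<pi>' True) * (f y - 1)) \<partial>\<nu>)"
    by (rule KL_out[OF prob sets_K p\<nu> fm fb K0 K1 p'])
  also have "(\<integral>y. Hf ((1 - 2 * pmf \<pi> True) * (f y - 1)) ((1 - 2 * pmf \<pi>' True) * (f y - 1)) \<partial>\<nu>)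
      = Df (1 - 2 * pmf \<pi> True) (1 - 2 * pmf \<pi>' True)"
    unfolding \<nu>_def
    by (subst integral_measure_pmf[where A=UNIV]) (auto simp: UNIV_bool f_def Df_def)
  finally show ?thesis by (simp add: out)
qed




lemma two_half: "2 * inverse (2::ennreal) = 1"
  using inv2 by (simp add: mult.commute)

lemma half_half: "inverse (2::ennreal) + inverse 2 = 1"
  using two_half by (simp add: mult_2[symmetric])

lemma channel_density:
  fixes K :: "bool \<Rightarrow> 'b measure" and M :: "'b measure"
  assumes prob: "\<And>x. prob_space (K x)" and sets_K: "\<And>x. sets (K x) = sets M"
  defines "\<nu> \<equiv> output_dist (bernoulli_pmf (1/2)) K"
  shows "prob_space \<nu>" and "sets \<nu> = sets M"
    and "\<And>A. A \<in> sets M \<Longrightarrow> emeasure \<nu> A = ennreal (1/2) * emeasure (K False) A + ennreal (1/2) * emeasure (K True) A"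
    and "\<exists>f. f \<in> borel_measurable M \<and> (\<forall>y\<in>space M. 0 \<le> f y \<and> f y \<le> 2) \<and>
          K False = density \<nu> f \<and> K True = density \<nu> (\<lambda>y. ennreal (2 - f y))"
proof -
  show s\<nu>: "sets \<nu> = sets M" unfolding \<nu>_def by (rule out_sets[OF sets_K])
  have sp\<nu>: "space \<nu> = space M" using sets_eq_imp_space_eq[OF s\<nu>] .
  show e\<nu>: "emeasure \<nu> A = ennreal (1/2) * emeasure (K False) A + ennreal (1/2) * emeasure (K True) A"
    if A: "A \<in> sets M" for A
    unfolding \<nu>_def using out_emeasure[where K=K, OF prob sets_K A] by simp
  have spK: "space (K x) = space M" for x by (rule sets_eq_imp_space_eq[OF sets_K])
  have e1: "emeasure (K x) (space M) = 1" for x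
    using prob_space.emeasure_space_1[OF prob[of x]] spK[of x] by simp
  show p\<nu>: "prob_space \<nu>"
  proof
    show "emeasure \<nu> (space \<nu>) = 1" using e\<nu>[of "space M"] e1 sp\<nu> by (simp add: half_half)
  qed
  interpret \<nu>: prob_space \<nu> by (rule p\<nu>)
  have ac: "absolutely_continuous \<nu> (K x)" for x
    unfolding absolutely_continuous_def
  proof
    fix A assume "A \<in> null_sets \<nu>"
    then have A: "A \<in> sets M" "emeasure \<nu> A = 0" using s\<nu> by auto
    then have "emeasure (K False) A = 0 \<and> emeasure (K True) A = 0" using e\<nu>[OF A(1)] by simp
    then have "emeasure (K x) A = 0" by (cases x) auto
    then show "A \<in> null_sets (K x)" using A sets_K by auto
  qed
  define r0 where "r0 = RN_deriv \<nu> (K False)"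
  define r1 where "r1 = RN_deriv \<nu> (K True)"
  have d0: "density \<nu> r0 = K False" unfolding r0_def using ac sets_K s\<nu> by (intro \<nu>.density_RN_deriv) auto
  have d1: "density \<nu> r1 = K True" unfolding r1_def using ac sets_K s\<nu> by (intro \<nu>.density_RN_deriv) auto
  have r0m: "r0 \<in> borel_measurable \<nu>" "r1 \<in> borel_measurable \<nu>" unfolding r0_def r1_def by auto
  have "density \<nu> (\<lambda>y. r0 y + r1 y) = density \<nu> (\<lambda>_. 2)"
  proof (rule measure_eqI)
    fix A assume "A \<in> sets (density \<nu> (\<lambda>y. r0 y + r1 y))"
    then have A: "A \<in> sets \<nu>" by simp
    then have AM: "A \<in> sets M" using s\<nu> by simp
    have "emeasure (density \<nu> (\<lambda>y. r0 y + r1 y)) A = (\<integral>\<^sup>+y. (r0 y + r1 y) * indicator A y \<partial>\<nu>)"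
      using A r0m by (intro emeasure_density) auto
    also have "\<dots> = (\<integral>\<^sup>+y. r0 y * indicator A y \<partial>\<nu>) + (\<integral>\<^sup>+y. r1 y * indicator A y \<partial>\<nu>)"
      using A r0m by (subst nn_integral_add[symmetric]) (auto simp: distrib_right)
    also have "\<dots> = emeasure (K False) A + emeasure (K True) A"
      using A r0m by (simp add: d0[symmetric] d1[symmetric] emeasure_density)
    also have "\<dots> = 2 * emeasure \<nu> A"
      using e\<nu>[OF AM] by (simp add: distrib_left mult.assoc[symmetric] two_half)
    also have "\<dots> = emeasure (density \<nu> (\<lambda>_. 2)) A"
      using A by (simp add: emeasure_density nn_integral_cmult_indicator)
    finally show "emeasure (density \<nu> (\<lambda>y. r0 y + r1 y)) A = emeasure (density \<nu> (\<lambda>_. 2)) A" .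
  qed simp
  then have sum: "AE y in \<nu>. r0 y + r1 y = 2"
    using r0m by (intro \<nu>.density_unique) auto
  define f where "f y = min 2 (enn2real (r0 y))" for y
  have fm: "f \<in> borel_measurable M"
    using r0m s\<nu> unfolding f_def[abs_def] by (simp add: measurable_cong_sets[OF s\<nu> refl, symmetric])
  have fb: "\<forall>y\<in>space M. 0 \<le> f y \<and> f y \<le> 2" by (auto simp: f_def)
  have AE0: "AE y in \<nu>. r0 y = ennreal (f y) \<and> r1 y = ennreal (2 - f y)"
    using sum
  proof eventually_elim
    case (elim y)
    have le0: "r0 y \<le> 2" using elim by (metis le_iff_add)
    have le1: "r1 y \<le> 2" using elim by (metis le_iff_add add.commute)
    have t0: "r0 y < top" using le0 by (simp add: le_less_trans)
    have t1: "r1 y < top" using le1 by (simp add: le_less_trans)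
    define e0 where "e0 = enn2real (r0 y)"
    define e1 where "e1 = enn2real (r1 y)"
    have r0e: "r0 y = ennreal e0" using t0 by (simp add: e0_def)
    have r1e: "r1 y = ennreal e1" using t1 by (simp add: e1_def)
    have nn: "0 \<le> e0" "0 \<le> e1" by (auto simp: e0_def e1_def)
    have "ennreal (e0 + e1) = ennreal 2" using elim r0e r1e ennreal_plus[OF nn] by simp
    then have s: "e0 + e1 = 2" by (subst (asm) ennreal_inj) (auto simp: e0_def e1_def)
    have "f y = e0" using s by (simp add: f_def e0_def[symmetric] e1_def) (smt (verit) enn2real_nonneg e1_def)
    moreover have "e1 = 2 - e0" using s by simp
    ultimately show ?case using r0e r1e by simp
  qed
  have "K False = density \<nu> f"
    unfolding d0[symmetric] using AE0 r0m fm s\<nu>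
    by (intro density_cong) (auto elim!: eventually_mono simp: measurable_cong_sets[OF s\<nu> refl])
  moreover have "K True = density \<nu> (\<lambda>y. ennreal (2 - f y))"
    unfolding d1[symmetric] using AE0 r0m fm s\<nu>
    by (intro density_cong) (auto elim!: eventually_mono simp: measurable_cong_sets[OF s\<nu> refl])
  ultimately show "\<exists>f. f \<in> borel_measurable M \<and> (\<forall>y\<in>space M. 0 \<le> f y \<and> f y \<le> 2) \<and>
          K False = density \<nu> f \<and> K True = density \<nu> (\<lambda>y. ennreal (2 - f y))"
    using fm fb by blast
qed




lemma chi2_calc:
  fixes K :: "bool \<Rightarrow> 'b measure" and \<nu> :: "'b measure" and f :: "'b \<Rightarrow> real"
  assumes prob: "\<And>x. prob_space (K x)" and sets_K: "\<And>x. sets (K x) = sets \<nu>"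
    and p\<nu>: "prob_space \<nu>"
    and fm: "f \<in> borel_measurable \<nu>" and fb: "\<And>y. y \<in> space \<nu> \<Longrightarrow> 0 \<le> f y \<and> f y \<le> 2"
    and K0: "K False = density \<nu> f" and K1: "K True = density \<nu> (\<lambda>y. ennreal (2 - f y))"
    and out: "output_dist (bernoulli_pmf (1/2)) K = \<nu>"
  shows "chi2_mutual_info (bernoulli_pmf (1/2)) K = ereal (\<integral>y. (f y - 1)^2 \<partial>\<nu>)"
proof -
  interpret \<nu>: prob_space \<nu> by (rule p\<nu>)
  define \<pi> where "\<pi> = bernoulli_pmf (1/2)"
  define PP where "PP = measure_pmf \<pi> \<Otimes>\<^sub>M \<nu>"
  define J where "J = joint_dist \<pi> K"
  define r :: "bool \<times> 'b \<Rightarrow> real" where "r z = (if fst z then 2 - f (snd z) else f (snd z))" for z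
  interpret P: pair_prob_space "measure_pmf \<pi>" \<nu>
    by (intro pair_prob_space.intro pair_sigma_finite.intro prob_space_imp_sigma_finite prob_space_measure_pmf p\<nu>)
  have setsPP: "sets PP = sets (count_space UNIV \<Otimes>\<^sub>M \<nu>)"
    unfolding PP_def by (intro sets_pair_measure_cong) auto
  have spK: "space (K x) = space \<nu>" for x by (rule sets_eq_imp_space_eq[OF sets_K])
  have rm: "r \<in> borel_measurable PP"
    unfolding r_def[abs_def] PP_def using fm by measurable
  have rb: "0 \<le> r z" if "z \<in> space PP" for z
    using that fb by (auto simp: r_def PP_def space_pair_measure)
  have kern: "(\<lambda>x. distr (K x) (count_space UNIV \<Otimes>\<^sub>M K x) (\<lambda>y. (x, y))) \<in> measurable (measure_pmf \<pi>) (subprob_algebra PP)"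
  proof -
    have "prob_space (distr (K x) (count_space UNIV \<Otimes>\<^sub>M K x) (\<lambda>y. (x, y)))" for x
      using prob[of x] by (intro prob_space.prob_space_distr measurable_Pair1') auto
    moreover have "sets (distr (K x) (count_space UNIV \<Otimes>\<^sub>M K x) (\<lambda>y. (x, y))) = sets PP" for x
      using setsPP sets_K[of x] by (simp add: sets_pair_measure_cong)
    ultimately show ?thesis by (auto simp: space_subprob_algebra prob_space_imp_subprob_space)
  qed
  have JD: "J = density PP r"
  proof (rule measure_eqI)
    show "sets J = sets (density PP r)"
      unfolding J_def joint_dist_def using setsPP sets_K
      by (subst sets_bind[where N=PP]) (auto simp: sets_pair_measure_cong)
    fix C assume "C \<in> sets J"
    then have C: "C \<in> sets PP"
      unfolding J_def joint_dist_def using setsPP sets_K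
      by (subst (asm) sets_bind[where N=PP]) (auto simp: sets_pair_measure_cong)
    define B where "B x = Pair x -` C \<inter> space \<nu>" for x
    have B: "B x \<in> sets \<nu>" for x
    proof -
      have "Pair x -` C \<in> sets \<nu>" using sets_Pair1[of C "count_space UNIV" \<nu>] C setsPP by simp
      then show ?thesis unfolding B_def by (simp add: sets.Int_space_eq2)
    qed
    have "emeasure J C = (\<integral>\<^sup>+x. emeasure (distr (K x) (count_space UNIV \<Otimes>\<^sub>M K x) (\<lambda>y. (x, y))) C \<partial>measure_pmf \<pi>)"
      unfolding J_def joint_dist_def by (rule emeasure_bind[OF _ kern C]) simp
    also have "\<dots> = (\<integral>\<^sup>+x. emeasure (K x) (B x) \<partial>measure_pmf \<pi>)"
    proof (rule nn_integral_cong)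
      fix x
      have "C \<in> sets (count_space UNIV \<Otimes>\<^sub>M K x)" using C setsPP sets_K[of x] by (simp add: sets_pair_measure_cong)
      then show "emeasure (distr (K x) (count_space UNIV \<Otimes>\<^sub>M K x) (\<lambda>y. (x, y))) C = emeasure (K x) (B x)"
        by (subst emeasure_distr) (auto intro!: measurable_Pair1' simp: B_def spK vimage_def)
    qed
    also have "\<dots> = emeasure (density PP r) C"
    proof -
      have "emeasure (density PP r) C = (\<integral>\<^sup>+z. ennreal (r z) * indicator C z \<partial>PP)"
        using C rm by (intro emeasure_density) auto
      also have "\<dots> = (\<integral>\<^sup>+x. \<integral>\<^sup>+y. ennreal (r (x, y)) * indicator C (x, y) \<partial>\<nu> \<partial>measure_pmf \<pi>)"
        unfolding PP_def using rm C by (intro \<nu>.nn_integral_fst[symmetric]) (auto simp: PP_def)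
      also have "\<dots> = (\<integral>\<^sup>+x. emeasure (K x) (B x) \<partial>measure_pmf \<pi>)"
      proof (rule nn_integral_cong)
        fix x
        have "(\<integral>\<^sup>+y. ennreal (r (x, y)) * indicator C (x, y) \<partial>\<nu>) = (\<integral>\<^sup>+y. ennreal (r (x, y)) * indicator (B x) y \<partial>\<nu>)"
          by (intro nn_integral_cong) (auto simp: B_def indicator_def)
        also have "\<dots> = emeasure (K x) (B x)"
          using B[of x] fm by (cases x) (auto simp: K0 K1 r_def emeasure_density)
        finally show "(\<integral>\<^sup>+y. ennreal (r (x, y)) * indicator C (x, y) \<partial>\<nu>) = emeasure (K x) (B x)" .
      qed
      finally show ?thesis by simp
    qed
    finally show "emeasure J C = emeasure (density PP r) C" .
  qed
  have setsJ: "sets J = sets PP" using JD by simp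
  have ac: "absolutely_continuous PP J" unfolding JD using rm by (intro absolutely_continuousI_density) auto
  have "AE z in PP. ennreal (r z) = RN_deriv PP J z"
    unfolding PP_def using rm JD by (intro P.RN_deriv_unique) (auto simp: PP_def)
  then have "AE z in J. ennreal (r z) = RN_deriv PP J z"
    unfolding JD using rm by (subst AE_density) (auto elim!: eventually_mono)
  then have "AE z in J. ennreal ((enn2real (RN_deriv PP J z) - 1)^2) = ennreal ((r z - 1)^2)"
    using AE_space
  proof eventually_elim
    case (elim z)
    then have "z \<in> space PP" using JD by simp
    then show ?case using elim rb by (metis enn2real_ennreal)
  qed
  then have "(\<integral>\<^sup>+ z. ennreal ((enn2real (RN_deriv PP J z) - 1)^2) \<partial>J) = (\<integral>\<^sup>+ z. ennreal ((r z - 1)^2) \<partial>J)"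
    by (rule nn_integral_cong_AE)
  also have "\<dots> = (\<integral>\<^sup>+ z. ennreal (r z) * ennreal ((r z - 1)^2) \<partial>PP)"
    unfolding JD using rm by (intro nn_integral_density) auto
  also have "\<dots> = (\<integral>\<^sup>+x. \<integral>\<^sup>+y. ennreal (r (x, y)) * ennreal ((r (x, y) - 1)^2) \<partial>\<nu> \<partial>measure_pmf \<pi>)"
    unfolding PP_def
    by (rule \<nu>.nn_integral_fst[of "\<lambda>z. ennreal (r z) * ennreal ((r z - 1)^2)" "measure_pmf \<pi>", symmetric])
       (use rm in \<open>auto simp: PP_def\<close>)
  also have "\<dots> = (\<integral>\<^sup>+y. ennreal ((f y - 1)^2) \<partial>\<nu>)"
  proof -
    have "(\<integral>\<^sup>+x. \<integral>\<^sup>+y. ennreal (r (x, y)) * ennreal ((r (x, y) - 1)^2) \<partial>\<nu> \<partial>measure_pmf \<pi>)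
      = inverse 2 * (\<integral>\<^sup>+y. ennreal (f y) * ennreal ((f y - 1)^2) \<partial>\<nu>)
        + inverse 2 * (\<integral>\<^sup>+y. ennreal (2 - f y) * ennreal ((2 - f y - 1)^2) \<partial>\<nu>)"
      by (simp add: nn_integral_pmf_bool \<pi>_def r_def)
    also have "\<dots> = (\<integral>\<^sup>+y. inverse 2 * (ennreal (f y) * ennreal ((f y - 1)^2))
        + inverse 2 * (ennreal (2 - f y) * ennreal ((2 - f y - 1)^2)) \<partial>\<nu>)"
      using fm by (simp add: nn_integral_add nn_integral_cmult)
    also have "\<dots> = (\<integral>\<^sup>+y. ennreal ((f y - 1)^2) \<partial>\<nu>)"
    proof (rule nn_integral_cong)
      fix y assume y: "y \<in> space \<nu>"
      have f0: "0 \<le> f y" "0 \<le> 2 - f y" using fb[OF y] by auto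
      have "ennreal (f y) * ennreal ((f y - 1)^2) + ennreal (2 - f y) * ennreal ((2 - f y - 1)^2)
          = ennreal (f y * (f y - 1)^2) + ennreal ((2 - f y) * (2 - f y - 1)^2)"
        using f0 by (simp add: ennreal_mult')
      also have "\<dots> = ennreal (f y * (f y - 1)^2 + (2 - f y) * (2 - f y - 1)^2)"
        using f0 by (intro ennreal_plus[symmetric]) auto
      also have "f y * (f y - 1)^2 + (2 - f y) * (2 - f y - 1)^2 = 2 * (f y - 1)^2"
        by (simp add: power2_eq_square algebra_simps)
      also have "ennreal (2 * (f y - 1)^2) = 2 * ennreal ((f y - 1)^2)"
        by (simp add: ennreal_mult')
      finally have e: "ennreal (f y) * ennreal ((f y - 1)^2) + ennreal (2 - f y) * ennreal ((2 - f y - 1)^2)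
          = 2 * ennreal ((f y - 1)^2)" .
      have "inverse 2 * (ennreal (f y) * ennreal ((f y - 1)^2))
        + inverse 2 * (ennreal (2 - f y) * ennreal ((2 - f y - 1)^2))
        = inverse 2 * (ennreal (f y) * ennreal ((f y - 1)^2) + ennreal (2 - f y) * ennreal ((2 - f y - 1)^2))"
        by (rule distrib_left[symmetric])
      also have "\<dots> = inverse 2 * (2 * ennreal ((f y - 1)^2))" by (subst e) (rule refl)
      also have "\<dots> = ennreal ((f y - 1)^2)" by (metis inv2 mult.assoc mult_1)
      finally show "inverse 2 * (ennreal (f y) * ennreal ((f y - 1)^2))
        + inverse 2 * (ennreal (2 - f y) * ennreal ((2 - f y - 1)^2)) = ennreal ((f y - 1)^2)" .
    qed
    finally show ?thesis .
  qed
  also have "\<dots> = ennreal (\<integral>y. (f y - 1)^2 \<partial>\<nu>)"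
  proof (rule nn_integral_eq_integral)
    show "integrable \<nu> (\<lambda>y. (f y - 1)^2)"
    proof (rule \<nu>.integrable_const_bound[where B=1])
      show "AE x in \<nu>. norm ((f x - 1)^2) \<le> 1"
      proof (rule AE_I2)
        fix y assume y: "y \<in> space \<nu>"
        have "\<bar>f y - 1\<bar> \<le> 1" using fb[OF y] by auto
        then have "\<bar>f y - 1\<bar>^2 \<le> 1" by (intro power_le_one) auto
        then show "norm ((f y - 1)^2) \<le> 1" by (simp only: real_norm_def power2_abs abs_power2)
      qed
    qed (use fm in simp)
  qed simp
  finally have eq: "(\<integral>\<^sup>+ z. ennreal ((enn2real (RN_deriv PP J z) - 1)^2) \<partial>J) = ennreal (\<integral>y. (f y - 1)^2 \<partial>\<nu>)" .
  have "chi2_mutual_info (bernoulli_pmf (1/2)) K = chi2_div J PP"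
    unfolding chi2_mutual_info_def J_def PP_def \<pi>_def out ..
  also have "\<dots> = enn2ereal (ennreal (\<integral>y. (f y - 1)^2 \<partial>\<nu>))"
    unfolding chi2_div_def using setsJ ac eq by simp
  also have "\<dots> = ereal (\<integral>y. (f y - 1)^2 \<partial>\<nu>)" by simp
  finally show ?thesis .
qed

lemma KL_inf:
  assumes "pmf \<pi>' x = 0" "pmf \<pi> x \<noteq> 0"
  shows "KL_div (measure_pmf \<pi>) (measure_pmf \<pi>') = \<infinity>"
proof -
  have "{x} \<in> null_sets (measure_pmf \<pi>')" using assms by (simp add: null_sets_def emeasure_pmf_single)
  moreover have "{x} \<notin> null_sets (measure_pmf \<pi>)" using assms by (simp add: null_sets_def emeasure_pmf_single)
  ultimately have "\<not> absolutely_continuous (measure_pmf \<pi>') (measure_pmf \<pi>)"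
    unfolding absolutely_continuous_def by blast
  then show ?thesis by (simp add: KL_div_def)
qed

lemma p'_range:
  assumes "\<pi> \<noteq> \<pi>'" "KL_div (measure_pmf \<pi>) (measure_pmf \<pi>') < \<infinity>"
  shows "0 < pmf \<pi>' True" "pmf \<pi>' True < 1"
proof -
  have eq: "\<pi> = \<pi>'" if "pmf \<pi> True = pmf \<pi>' True"
  proof (rule pmf_eqI)
    fix i show "pmf \<pi> i = pmf \<pi>' i" using that by (cases i) (auto simp: pmf_False_conv_True)
  qed
  show "0 < pmf \<pi>' True"
  proof (rule ccontr)
    assume "\<not> 0 < pmf \<pi>' True"
    then have z: "pmf \<pi>' True = 0" using pmf_nonneg[of \<pi>' True] by linarith
    then have "pmf \<pi> True \<noteq> 0" using eq assms(1) by auto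
    then show False using KL_inf[OF z] assms(2) by simp
  qed
  show "pmf \<pi>' True < 1"
  proof (rule ccontr)
    assume "\<not> pmf \<pi>' True < 1"
    then have z: "pmf \<pi>' False = 0" using pmf_le_1[of \<pi>' True] by (simp add: pmf_False_conv_True)
    have "pmf \<pi> False \<noteq> 0"
    proof
      assume "pmf \<pi> False = 0"
      then have "pmf \<pi> True = pmf \<pi>' True" using z by (simp add: pmf_False_conv_True)
      then show False using eq assms(1) by auto
    qed
    then show False using KL_inf[OF z] assms(2) by simp
  qed
qed




theorem mainTheorem12:
  fixes K :: "bool \<Rightarrow> 'b measure" and M :: "'b measure" and T :: "'b \<Rightarrow> 'b"
  assumes prob: "\<And>x. prob_space (K x)"
    and sets_K: "\<And>x. sets (K x) = sets M"
    and T_meas: "T \<in> measurable M M"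
    and T_inv: "\<And>y. y \<in> space M \<Longrightarrow> T (T y) = y"
    and symm: "\<And>A. A \<in> sets M \<Longrightarrow>
                 emeasure (K False) (T -` A \<inter> space M) = emeasure (K True) A"
  shows "eta_KL K = chi2_mutual_info (bernoulli_pmf (1/2)) K"
proof -
  define \<nu> where "\<nu> = output_dist (bernoulli_pmf (1/2)) K"
  note cd = channel_density[where K=K and M=M, OF prob sets_K, folded \<nu>_def]
  have p\<nu>: "prob_space \<nu>" and s\<nu>: "sets \<nu> = sets M" using cd(1,2) by auto
  have e\<nu>: "\<And>A. A \<in> sets M \<Longrightarrow> emeasure \<nu> A = ennreal (1/2) * emeasure (K False) A + ennreal (1/2) * emeasure (K True) A"
    using cd(3) by auto
  obtain f where fmM: "f \<in> borel_measurable M" and fbM: "\<forall>y\<in>space M. 0 \<le> f y \<and> f y \<le> 2"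
    and K0: "K False = density \<nu> f" and K1: "K True = density \<nu> (\<lambda>y. ennreal (2 - f y))"
    using cd(4) by blast
  interpret \<nu>: prob_space \<nu> by (rule p\<nu>)
  have sp\<nu>: "space \<nu> = space M" using sets_eq_imp_space_eq[OF s\<nu>] .
  have sets_K': "\<And>x. sets (K x) = sets \<nu>" using sets_K s\<nu> by simp
  have mcong: "measurable \<nu> N = measurable M N" for N :: "'c measure"
    by (rule measurable_cong_sets[OF s\<nu> refl])
  have fm: "f \<in> borel_measurable \<nu>" using fmM by (simp add: mcong)
  have fb: "\<And>y. y \<in> space \<nu> \<Longrightarrow> 0 \<le> f y \<and> f y \<le> 2" using fbM sp\<nu> by auto
  have T\<nu>: "T \<in> measurable \<nu> \<nu>" using T_meas by (simp add: mcong measurable_cong_sets[OF refl s\<nu>])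
  define c where "c = (\<integral>y. (f y - 1)^2 \<partial>\<nu>)"
  have chi: "chi2_mutual_info (bernoulli_pmf (1/2)) K = ereal c"
    unfolding c_def by (rule chi2_calc[OF prob sets_K' p\<nu> fm fb K0 K1 \<nu>_def[symmetric]])
  have TB: "T -` A \<inter> space M \<in> sets M" if "A \<in> sets M" for A
    using T_meas that by (rule measurable_sets)
  have TT: "T -` (T -` A \<inter> space M) \<inter> space M = A" if "A \<in> sets M" for A
  proof -
    have Asp: "A \<subseteq> space M" using sets.sets_into_space[OF that] .
    have Tsp: "T y \<in> space M" if "y \<in> space M" for y using T_meas that by (rule measurable_space)
    show ?thesis
    proof (intro set_eqI iffI)
      fix y assume "y \<in> T -` (T -` A \<inter> space M) \<inter> space M"
      then show "y \<in> A" using T_inv by auto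
    next
      fix y assume y: "y \<in> A"
      then have "y \<in> space M" using Asp by auto
      then show "y \<in> T -` (T -` A \<inter> space M) \<inter> space M" using T_inv[of y] Tsp y by auto
    qed
  qed
  have S1: "distr \<nu> \<nu> T = \<nu>"
  proof (rule measure_eqI)
    fix A assume "A \<in> sets (distr \<nu> \<nu> T)"
    then have A: "A \<in> sets M" using s\<nu> by simp
    have "emeasure (distr \<nu> \<nu> T) A = emeasure \<nu> (T -` A \<inter> space M)"
      using A s\<nu> T\<nu> sp\<nu> by (subst emeasure_distr) auto
    also have "\<dots> = ennreal (1/2) * emeasure (K True) A + ennreal (1/2) * emeasure (K False) A"
      using e\<nu>[OF TB[OF A]] symm[OF A] symm[OF TB[OF A]] TT[OF A] by simp
    also have "\<dots> = emeasure \<nu> A" using e\<nu>[OF A] by (simp add: add.commute)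
    finally show "emeasure (distr \<nu> \<nu> T) A = emeasure \<nu> A" .
  qed simp
  have Tsp: "T y \<in> space M" if "y \<in> space M" for y using T_meas that by (rule measurable_space)
  have "density \<nu> (\<lambda>y. ennreal (f (T y))) = K True"
  proof (rule measure_eqI)
    fix A assume "A \<in> sets (density \<nu> (\<lambda>y. ennreal (f (T y))))"
    then have A: "A \<in> sets M" using s\<nu> by simp
    define B where "B = T -` A \<inter> space M"
    have B: "B \<in> sets \<nu>" using TB[OF A] s\<nu> by (simp add: B_def)
    have "emeasure (density \<nu> (\<lambda>y. ennreal (f (T y)))) A = (\<integral>\<^sup>+y. ennreal (f (T y)) * indicator A y \<partial>\<nu>)"
      using A s\<nu> fm T\<nu> by (intro emeasure_density) auto
    also have "\<dots> = (\<integral>\<^sup>+y. (\<lambda>z. ennreal (f z) * indicator B z) (T y) \<partial>\<nu>)"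
    proof (rule nn_integral_cong)
      fix y assume y: "y \<in> space \<nu>"
      then have "T y \<in> B \<longleftrightarrow> y \<in> A" using T_inv[of y] Tsp[of y] sp\<nu> by (auto simp: B_def)
      then show "ennreal (f (T y)) * indicator A y = (\<lambda>z. ennreal (f z) * indicator B z) (T y)"
        by (simp add: indicator_def)
    qed
    also have "\<dots> = (\<integral>\<^sup>+z. ennreal (f z) * indicator B z \<partial>distr \<nu> \<nu> T)"
      using T\<nu> fm B by (intro nn_integral_distr[symmetric]) auto
    also have "\<dots> = emeasure (K False) B" unfolding S1 K0 using fm B by (simp add: emeasure_density)
    also have "\<dots> = emeasure (K True) A" unfolding B_def by (rule symm[OF A])
    finally show "emeasure (density \<nu> (\<lambda>y. ennreal (f (T y)))) A = emeasure (K True) A" .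
  qed (simp add: sets_K')
  then have "AE y in \<nu>. ennreal (f (T y)) = ennreal (2 - f y)"
    unfolding K1 using fm T\<nu> by (intro \<nu>.density_unique) auto
  then have S2: "AE y in \<nu>. f (T y) = 2 - f y"
    using AE_space
  proof eventually_elim
    case (elim y)
    have "0 \<le> f (T y)" "0 \<le> 2 - f y" using fb[of y] fb[of "T y"] Tsp[of y] elim(2) sp\<nu> by auto
    then show ?case using elim(1) by simp
  qed
  define g where "g y = f y - 1" for y
  have gm: "g \<in> borel_measurable \<nu>" unfolding g_def[abs_def] using fm by measurable
  have gb: "\<bar>g y\<bar> \<le> 1" if "y \<in> space \<nu>" for y using fb[OF that] by (auto simp: g_def)
  have gT: "AE y in \<nu>. g (T y) = - g y" using S2 by (auto simp: g_def elim!: eventually_mono)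
  have Hm: "(\<lambda>y. Hf (a * g y) (b * g y)) \<in> borel_measurable \<nu>" for a b
    unfolding Hf_def using gm by measurable
  have intH: "integrable \<nu> (\<lambda>y. Hf (a * g y) (b * g y))" if a: "\<bar>a\<bar> \<le> 1" and b: "\<bar>b\<bar> < 1" for a b
  proof (rule \<nu>.integrable_const_bound[where B="2 + 4/(1-\<bar>b\<bar>)"])
    show "AE x in \<nu>. norm (Hf (a * g x) (b * g x)) \<le> 2 + 4/(1-\<bar>b\<bar>)"
    proof (rule AE_I2)
      fix y assume y: "y \<in> space \<nu>"
      have ag: "\<bar>a * g y\<bar> \<le> 1" using mult_le_one[OF a _ gb[OF y]] by (simp add: abs_mult)
      have bg: "\<bar>b * g y\<bar> \<le> \<bar>b\<bar>"
        using mult_left_le_one_le[of "\<bar>b\<bar>" "\<bar>g y\<bar>"] gb[OF y] by (simp add: abs_mult mult.commute)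
      have "\<bar>Hf (a * g y) (b * g y)\<bar> \<le> 2 + 4/(1-\<bar>b\<bar>)" by (rule Hf_bound[OF ag bg b])
      then show "norm (Hf (a * g y) (b * g y)) \<le> 2 + 4/(1-\<bar>b\<bar>)" by simp
    qed
  qed (rule Hm)
  have symH: "(\<integral>y. Hf (a * g y) (b * g y) \<partial>\<nu>) = (\<integral>y. Hf ((-a) * g y) ((-b) * g y) \<partial>\<nu>)" for a b
  proof -
    have "(\<integral>y. Hf (a * g y) (b * g y) \<partial>\<nu>) = (\<integral>y. Hf (a * g y) (b * g y) \<partial>distr \<nu> \<nu> T)"
      by (simp add: S1)
    also have "\<dots> = (\<integral>y. Hf (a * g (T y)) (b * g (T y)) \<partial>\<nu>)"
      using T\<nu> Hm by (rule integral_distr)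
    also have "\<dots> = (\<integral>y. Hf ((-a) * g y) ((-b) * g y) \<partial>\<nu>)"
    proof (rule integral_cong_AE)
      show "(\<lambda>y. Hf (a * g (T y)) (b * g (T y))) \<in> borel_measurable \<nu>"
        using measurable_compose[OF T\<nu> Hm[of a b]] by simp
      show "(\<lambda>y. Hf ((-a) * g y) ((-b) * g y)) \<in> borel_measurable \<nu>" by (rule Hm)
      show "AE y in \<nu>. Hf (a * g (T y)) (b * g (T y)) = Hf ((-a) * g y) ((-b) * g y)"
        using gT by (auto elim!: eventually_mono)
    qed
    finally show ?thesis .
  qed
  have DfI: "(\<integral>y. Hf (a * g y) (b * g y) \<partial>\<nu>) = (\<integral>y. Df (a * g y) (b * g y) \<partial>\<nu>)"
    and intD: "integrable \<nu> (\<lambda>y. Df (a * g y) (b * g y))"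
    if a: "\<bar>a\<bar> \<le> 1" and b: "\<bar>b\<bar> < 1" for a b
  proof -
    have i1: "integrable \<nu> (\<lambda>y. Hf (a * g y) (b * g y))" using intH a b by blast
    have i2: "integrable \<nu> (\<lambda>y. Hf ((-a) * g y) ((-b) * g y))" using intH[of "-a" "-b"] a b by simp
    have eqD: "Df (a * g y) (b * g y) = (Hf (a * g y) (b * g y) + Hf ((-a) * g y) ((-b) * g y)) / 2" for y
      by (simp add: Df_def)
    show "integrable \<nu> (\<lambda>y. Df (a * g y) (b * g y))" unfolding eqD using i1 i2 by auto
    have "(\<integral>y. Df (a * g y) (b * g y) \<partial>\<nu>)
        = ((\<integral>y. Hf (a * g y) (b * g y) \<partial>\<nu>) + (\<integral>y. Hf ((-a) * g y) ((-b) * g y) \<partial>\<nu>)) / 2"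
      unfolding eqD using i1 i2 by simp
    then show "(\<integral>y. Hf (a * g y) (b * g y) \<partial>\<nu>) = (\<integral>y. Df (a * g y) (b * g y) \<partial>\<nu>)"
      using symH[of a b] by simp
  qed
  have KLo: "KL_div (output_dist \<pi> K) (output_dist \<pi>' K) =
      ereal (\<integral>y. Df ((1 - 2 * pmf \<pi> True) * g y) ((1 - 2 * pmf \<pi>' True) * g y) \<partial>\<nu>)"
    if p': "0 < pmf \<pi>' True" "pmf \<pi>' True < 1" for \<pi> \<pi>'
  proof -
    have a: "\<bar>1 - 2 * pmf \<pi> True\<bar> \<le> 1"
    proof -
      have "0 \<le> pmf \<pi> True" "pmf \<pi> True \<le> 1" by (auto simp: pmf_le_1)
      then show ?thesis by linarith
    qed
    have b: "\<bar>1 - 2 * pmf \<pi>' True\<bar> < 1" using p' by linarith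
    show ?thesis
      using KL_out[OF prob sets_K' p\<nu> fm fb K0 K1 p', of \<pi>] DfI[OF a b] by (simp add: g_def)
  qed
  have c_eq: "c = (\<integral>y. (g y)^2 \<partial>\<nu>)" by (simp add: c_def g_def)
  have intg2: "integrable \<nu> (\<lambda>y. (g y)^2)"
  proof (rule \<nu>.integrable_const_bound[where B=1])
    show "AE x in \<nu>. norm ((g x)^2) \<le> 1"
    proof (rule AE_I2)
      fix y assume y: "y \<in> space \<nu>"
      have "\<bar>g y\<bar>^2 \<le> 1" using gb[OF y] by (intro power_le_one) auto
      then show "norm ((g y)^2) \<le> 1" by (simp only: real_norm_def power2_abs abs_power2)
    qed
  qed (use gm in simp)
  have c0: "0 \<le> c" unfolding c_eq by (intro integral_nonneg_AE) auto
  define S :: "(bool pmf \<times> bool pmf) set" where "S = {(\<pi>, \<pi>'). \<pi> \<noteq> \<pi>' \<and>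
                        0 < KL_div (measure_pmf \<pi>) (measure_pmf \<pi>') \<and>
                        KL_div (measure_pmf \<pi>) (measure_pmf \<pi>') < \<infinity>}"
  define R where "R p = KL_div (output_dist (fst p) K) (output_dist (snd p) K)
        / KL_div (measure_pmf (fst p)) (measure_pmf (snd p))" for p
  have eta: "eta_KL K = (SUP p \<in> S. R p)" unfolding eta_KL_def S_def R_def ..
  have upper: "R p \<le> ereal c" if "p \<in> S" for p
  proof -
    obtain \<pi> \<pi>' where p: "p = (\<pi>, \<pi>')" by (cases p)
    have ne: "\<pi> \<noteq> \<pi>'" and pos: "0 < KL_div (measure_pmf \<pi>) (measure_pmf \<pi>')"
      and fin: "KL_div (measure_pmf \<pi>) (measure_pmf \<pi>') < \<infinity>" using that by (auto simp: S_def p)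
    note pr = p'_range[OF ne fin]
    define a where "a = 1 - 2 * pmf \<pi> True"
    define b where "b = 1 - 2 * pmf \<pi>' True"
    have a: "\<bar>a\<bar> \<le> 1"
    proof -
      have "0 \<le> pmf \<pi> True" "pmf \<pi> True \<le> 1" by (auto simp: pmf_le_1)
      then show ?thesis unfolding a_def by linarith
    qed
    have b: "\<bar>b\<bar> < 1" using pr unfolding b_def by linarith
    have KLi: "KL_div (measure_pmf \<pi>) (measure_pmf \<pi>') = ereal (Df a b)"
      using KL_in[OF pr] by (simp add: a_def b_def)
    have d0: "0 < Df a b" using pos KLi by simp
    have pt: "Df (a * g y) (b * g y) \<le> (g y)^2 * Df a b" if y: "y \<in> space \<nu>" for y
    proof (cases "g y \<ge> 0")
      case True
      then show ?thesis using D_scale[OF a b True, of] gb[OF y] by (simp add: mult.commute)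
    next
      case False
      have "Df (a * g y) (b * g y) = Df ((- g y) * a) ((- g y) * b)"
        using Df_even[of "a * g y" "b * g y"] by (simp add: mult.commute)
      also have "\<dots> \<le> (- g y)^2 * Df a b" using D_scale[OF a b, of "- g y"] False gb[OF y] by simp
      finally show ?thesis by simp
    qed
    have "(\<integral>y. Df (a * g y) (b * g y) \<partial>\<nu>) \<le> (\<integral>y. (g y)^2 * Df a b \<partial>\<nu>)"
      using intD[OF a b] intg2 pt by (intro integral_mono) auto
    also have "\<dots> = c * Df a b" by (simp add: c_eq)
    finally have le: "(\<integral>y. Df (a * g y) (b * g y) \<partial>\<nu>) \<le> c * Df a b" .
    have "R p = ereal (\<integral>y. Df (a * g y) (b * g y) \<partial>\<nu>) / ereal (Df a b)"
      unfolding R_def p using KLo[OF pr, of \<pi>] KLi by (simp add: a_def b_def)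
    also have "\<dots> = ereal ((\<integral>y. Df (a * g y) (b * g y) \<partial>\<nu>) / Df a b)" using d0 by simp
    also have "\<dots> \<le> ereal c" using le d0 by (simp add: divide_le_eq)
    finally show ?thesis .
  qed
  have lower: "ereal ((1 - e) * c) \<le> (SUP p \<in> S. R p)" if e: "0 < e" "e < 1" for e
  proof -
    define \<pi> where "\<pi> = bernoulli_pmf ((1 - e)/2)"
    define \<pi>' where "\<pi>' = bernoulli_pmf (1/2)"
    have p\<pi>: "pmf \<pi> True = (1 - e)/2" using e by (simp add: \<pi>_def)
    have p\<pi>': "pmf \<pi>' True = 1/2" by (simp add: \<pi>'_def)
    have pr: "0 < pmf \<pi>' True" "pmf \<pi>' True < 1" using p\<pi>' by auto
    have A1: "1 - 2 * pmf \<pi> True = e" using p\<pi> by simp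
    have A2: "1 - 2 * pmf \<pi>' True = 0" using p\<pi>' by simp
    have KLi: "KL_div (measure_pmf \<pi>) (measure_pmf \<pi>') = ereal (Df e 0)"
      using KL_in[OF pr, of \<pi>] unfolding A1 A2 .
    have dl: "e^2/2 \<le> Df e 0" using D0_lower[of e] e by simp
    have du: "Df e 0 \<le> e^2/(2*(1-e))" using D0_upper[of e] e by simp
    have d0: "0 < Df e 0" using dl e by (smt (verit) zero_less_power divide_pos_pos)
    have ne: "\<pi> \<noteq> \<pi>'" using p\<pi> p\<pi>' e by auto
    have inS: "(\<pi>, \<pi>') \<in> S" using ne KLi d0 by (simp add: S_def)
    have pt: "(e * g y)^2 / 2 \<le> Df (e * g y) (0 * g y)" if y: "y \<in> space \<nu>" for y
    proof -
      have "\<bar>e * g y\<bar> < 1"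
      proof -
        have "\<bar>e * g y\<bar> \<le> e" using gb[OF y] e by (simp add: abs_mult mult_left_le)
        then show ?thesis using e by simp
      qed
      then show ?thesis using D0_lower by simp
    qed
    have ae: "\<bar>e\<bar> \<le> 1" "\<bar>0::real\<bar> < 1" using e by auto
    have "(\<integral>y. (e * g y)^2 / 2 \<partial>\<nu>) \<le> (\<integral>y. Df (e * g y) (0 * g y) \<partial>\<nu>)"
      using intD[OF ae] intg2 pt by (intro integral_mono) (auto simp: power_mult_distrib)
    moreover have "(\<integral>y. (e * g y)^2 / 2 \<partial>\<nu>) = e^2 * c / 2"
      by (simp add: c_eq power_mult_distrib)
    ultimately have X: "e^2 * c / 2 \<le> (\<integral>y. Df (e * g y) (0 * g y) \<partial>\<nu>)" by simp
    have "R (\<pi>, \<pi>') = ereal (\<integral>y. Df (e * g y) (0 * g y) \<partial>\<nu>) / ereal (Df e 0)"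
      unfolding R_def using KLo[OF pr, of \<pi>] KLi unfolding A1 A2 by simp
    also have "\<dots> = ereal ((\<integral>y. Df (e * g y) (0 * g y) \<partial>\<nu>) / Df e 0)" using d0 by simp
    finally have Req: "R (\<pi>, \<pi>') = ereal ((\<integral>y. Df (e * g y) (0 * g y) \<partial>\<nu>) / Df e 0)" .
    have "(1 - e) * c \<le> (\<integral>y. Df (e * g y) (0 * g y) \<partial>\<nu>) / Df e 0"
    proof -
      have "(1 - e) * c * Df e 0 \<le> (1 - e) * c * (e^2/(2*(1-e)))"
        using du c0 e by (intro mult_left_mono) auto
      also have "\<dots> = e^2 * c / 2" using e by (simp add: field_simps)
      finally show ?thesis using X d0 by (simp add: le_divide_eq)
    qed
    then have "ereal ((1 - e) * c) \<le> R (\<pi>, \<pi>')" using Req by simp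
    also have "\<dots> \<le> (SUP p \<in> S. R p)" using inS by (rule SUP_upper)
    finally show ?thesis .
  qed
  have le1: "(SUP p \<in> S. R p) \<le> ereal c" by (rule SUP_least) (rule upper)
  have le2: "ereal c \<le> (SUP p \<in> S. R p)"
  proof (rule ccontr)
    assume "\<not> ereal c \<le> (SUP p \<in> S. R p)"
    then have lt: "(SUP p \<in> S. R p) < ereal c" by simp
    have h: "ereal ((1 - 1/2) * c) \<le> (SUP p \<in> S. R p)" using lower[of "1/2"] by simp
    obtain s where s: "(SUP p \<in> S. R p) = ereal s"
      using h lt by (cases "(SUP p \<in> S. R p)") auto
    have sc: "s < c" "c / 2 \<le> s" using lt h s by auto
    then have cpos: "0 < c" using c0 by linarith
    define e where "e = (c - s) / (2 * c)"
    have e: "0 < e" "e < 1" using sc cpos by (auto simp: e_def field_simps)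
    have "(1 - e) * c = (c + s) / 2" using cpos by (simp add: e_def field_simps)
    then have "s < (1 - e) * c" using sc by simp
    moreover have "(1 - e) * c \<le> s" using lower[OF e] s by simp
    ultimately show False by simp
  qed
  show ?thesis using eta le1 le2 chi by simp
qed


end
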